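(* The sequent $\cdot;\cdot\Rightarrow\bot$ (empty context, no hypotheses, conclusion $\bot$) is not derivable in the sequent calculus $NL^{\Rightarrow}$.
   Context: Types are $\tau ::= \delta \mid \nu \mid \langle\nu\rangle\tau$, with $\delta$ ranging over data types and $\nu$ over name types. Terms are $t ::= x \mid \mathsf{a} \mid c \mid f(t_1,\dots,t_n)$, where $x$ ranges over a countably infinite set of variables and $\mathsf a,\mathsf b,\dots$ over a disjoint countably infinite set of name-symbols. The signature assigns $c:\delta$, $f:\tau_1,\dots,\tau_n\to\delta$, $p:\tau_1,\dots,\tau_n\to o$, and contains for all name types $\nu$ and types $\tau$ the symbols $swap:\nu,\nu,\tau\to\tau$, $abs:\nu,\tau\to\langle\nu\rangle\tau$, $eq:\tau,\tau\to o$, $fresh:\nu,\tau\to o$, written $(a\;b)\cdot t$, $\langle a\rangle t$, $t\approx u$, $a\# t$. Formulas: $\top,\bot,p(\vec t),\phi\wedge\psi,\phi\vee\psi,\phi\supset\psi,\forall x{:}\tau.\phi,\exists x{:}\tau.\phi$, and $\mathsf{N}\mathsf a{:}\nu.\phi$ (the fresh-name quantifier, binding the name-symbol $\mathsf a$). Contexts are $\Sigma::=\cdot\mid\Sigma,x{:}\tau\mid\Sigma\#\mathsf a{:}\nu$ (no symbol twice); $\Sigma\#\mathsf a{:}\nu$ records that $\mathsf a$ has type $\nu$ and is fresh for everything in $\Sigma$. Typing is the standard many-sorted one ($\Sigma\vdash\mathsf N\mathsf a{:}\nu.\phi:o$ iff $\Sigma\#\mathsf a{:}\nu\vdash\phi:o$).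 $Tm_\Sigma$ is the set of terms well-typed in $\Sigma$; $|\cdot|=\emptyset$, $|\Sigma,x{:}\tau|=|\Sigma|$, $|\Sigma\#\mathsf a{:}\nu|=|\Sigma|\cup\{\mathsf a\#t\mid t\in Tm_\Sigma\}$. $NL^{\Rightarrow}$ derives sequents $\Sigma;\Gamma\Rightarrow\Delta$ ($\Gamma,\Delta$ finite multisets of formulas well-formed in $\Sigma$) by: (i) the classical G3c rules: initial sequents $\Sigma;\Gamma,P\Rightarrow P,\Delta$ for atomic $P$, $\Sigma;\Gamma\Rightarrow\top,\Delta$, $\Sigma;\Gamma,\bot\Rightarrow\Delta$, and the standard context-sharing left/right rules for $\wedge,\vee,\supset,\forall,\exists$ ($\forall R$, $\exists L$ add a fresh eigenvariable $x{:}\sigma$ to $\Sigma$; $\forall L$ from $\Sigma;\Gamma,\forall x{:}\sigma.\phi,\phi[t/x]\Rightarrow\Delta$ and $\exists R$ from $\Sigma;\Gamma\Rightarrow\exists x{:}\sigma.\phi,\phi[t/x],\Delta$ with $\Sigma\vdash t:\sigma$); (ii) $\mathsf N R$: from $\Sigma\#\mathsf a{:}\nu;\Gamma\Rightarrow\phi,\Delta$ infer $\Sigma;\Gamma\Rightarrow\mathsf N\mathsf a{:}\nu.\phi,\Delta$, and $\mathsf N L$: from $\Sigma\#\mathsf a{:}\nu;\Gamma,\phi\Rightarrow\Delta$ infer $\Sigma;\Gamma,\mathsf N\mathsf a{:}\nu.\phi\Rightarrow\Delta$ (both with $\mathsf a\notin\Sigma$); (iii) nonlogical rules: $\approx R$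 (from $\Sigma;\Gamma,t\approx t\Rightarrow\Delta$ infer $\Sigma;\Gamma\Rightarrow\Delta$); $\approx S$ (from $\Sigma;\Gamma,t\approx u,P(t),P(u)\Rightarrow\Delta$ infer $\Sigma;\Gamma,t\approx u,P(t)\Rightarrow\Delta$, $P$ atomic); for each instance $P_1\wedge\dots\wedge P_n\supset Q_1\vee\dots\vee Q_m$ ($m\ge 0$) of the schemes (S1) $(a\;a)\cdot x\approx x$, (S2) $(a\;b)\cdot(a\;b)\cdot x\approx x$, (S3) $(a\;b)\cdot a\approx b$, (E1) $(a\;b)\cdot c\approx c$, (E2) $(a\;b)\cdot f(\vec t)\approx f((a\;b)\cdot\vec t)$, (E3) $p(\vec t)\supset p((a\;b)\cdot\vec t)$, (F1) $a\#x\wedge b\#x\supset(a\;b)\cdot x\approx x$, (F2) $a\#b$ for $a,b$ of distinct name types, (F3) $a\#a\supset\bot$ ($m=0$), (F4) $a\#b\vee a\approx b$, (A1) $a\#y\wedge x\approx(a\;b)\cdot y\supset\langle a\rangle x\approx\langle b\rangle y$ (with $a,b$ arbitrary well-typed terms of name type, $x,y,\vec t$ arbitrary well-typed terms), the rule: from $\Sigma;\Gamma,\vec P,Q_i\Rightarrow\Delta$ for all $i\le m$ infer $\Sigma;\Gamma,\vec P\Rightarrow\Delta$; (A2) from $\Sigma;\Gamma,E,a\approx b,t\approx u\Rightarrow\Delta$ and $\Sigma;\Gamma,E,a\#u,t\approx(a\;b)\cdot u\Rightarrow\Delta$ infer $\Sigma;\Gamma,E\Rightarrow\Delta$, where $E$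 is $\langle a\rangle t\approx\langle b\rangle u$; (A3) from $\Sigma\vdash t:\langle\nu\rangle\sigma$ and $\Sigma,a{:}\nu,x{:}\sigma;\Gamma,t\approx\langle a\rangle x\Rightarrow\Delta$ ($a,x\notin\Sigma$) infer $\Sigma;\Gamma\Rightarrow\Delta$; (F) from $\Sigma\#\mathsf a{:}\nu;\Gamma\Rightarrow\Delta$ ($\mathsf a\notin\Sigma$) infer $\Sigma;\Gamma\Rightarrow\Delta$; ($\Sigma\#$) from $\Sigma;\Gamma,\mathsf a\#t\Rightarrow\Delta$ with $\mathsf a\#t\in|\Sigma|$ infer $\Sigma;\Gamma\Rightarrow\Delta$. *)

theory Defs
  imports Main "HOL-Library.Multiset"
begin

section \<open>Syntax of nominal logic (locally nameless representation)\<close>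

text \<open>Types: tau ::= delta | nu | <nu>tau.  Data types range over 'd, name types over 'n.\<close>
datatype ('d, 'n) ty = TData 'd | TName 'n | TAbs 'n "('d, 'n) ty"

text \<open>Free variables x are natural numbers (countably infinite), free
  name-symbols are natural numbers (a disjoint countably infinite set, via the
  constructor Nm).  BVar i / BNm i are de Bruijn indices for variables bound by
  a quantifier (All/Ex) resp. name-symbols bound by the fresh-name quantifier
  (New); they never occur in the formulas of a sequent except under binders.
  Swap a b t is (a b).t, Abst a t is <a>t.\<close>
datatype ('c, 'f) tm =
    Var nat | BVar nat | Nm nat | BNm nat
  | Const 'c | Fn 'f "('c, 'f) tm list"
  | Swap "('c, 'f) tm" "('c, 'f) tm" "('c, 'f) tm"
  | Abst "('c, 'f) tm" "('c, 'f) tm"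

text \<open>Formulas.  Eq t u is t \<approx> u, Fresh a t is a # t;  All/Ex bind a variable
  (index space of BVar), New binds a name-symbol (index space of BNm).\<close>
datatype ('d, 'n, 'c, 'f, 'p) fm =
    Top | Bot
  | Pred 'p "('c, 'f) tm list"
  | Eq "('c, 'f) tm" "('c, 'f) tm"
  | Fresh "('c, 'f) tm" "('c, 'f) tm"
  | Conj "('d, 'n, 'c, 'f, 'p) fm" "('d, 'n, 'c, 'f, 'p) fm"
  | Disj "('d, 'n, 'c, 'f, 'p) fm" "('d, 'n, 'c, 'f, 'p) fm"
  | Imp "('d, 'n, 'c, 'f, 'p) fm" "('d, 'n, 'c, 'f, 'p) fm"
  | All "('d, 'n) ty" "('d, 'n, 'c, 'f, 'p) fm"
  | Ex "('d, 'n) ty" "('d, 'n, 'c, 'f, 'p) fm"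
  | New 'n "('d, 'n, 'c, 'f, 'p) fm"

text \<open>The (user part of the) signature: c : delta, f : tau_1..tau_n -> delta,
  p : tau_1..tau_n -> o.  swap, abs, eq, fresh are built in.\<close>
record ('c, 'f, 'p, 'd, 'n) signature =
  sig_c :: "'c \<Rightarrow> 'd"
  sig_f :: "'f \<Rightarrow> ('d, 'n) ty list \<times> 'd"
  sig_p :: "'p \<Rightarrow> ('d, 'n) ty list"

text \<open>Context entries: x:tau  and  #a:nu.  A context is a list, read left to right.\<close>
datatype ('d, 'n) centry = CVar nat "('d, 'n) ty" | CNm nat 'n

type_synonym ('d, 'n) ctx = "('d, 'n) centry list"

fun entry_sym :: "('d, 'n) centry \<Rightarrow> nat + nat" where
  "entry_sym (CVar x _) = Inl x"
| "entry_sym (CNm a _) = Inr a"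

definition ctx_ok :: "('d, 'n) ctx \<Rightarrow> bool" where
  "ctx_ok \<Sigma> \<longleftrightarrow> distinct (map entry_sym \<Sigma>)"

definition var_in :: "nat \<Rightarrow> ('d, 'n) ctx \<Rightarrow> bool" where
  "var_in x \<Sigma> \<longleftrightarrow> Inl x \<in> set (map entry_sym \<Sigma>)"

definition nm_in :: "nat \<Rightarrow> ('d, 'n) ctx \<Rightarrow> bool" where
  "nm_in a \<Sigma> \<longleftrightarrow> Inr a \<in> set (map entry_sym \<Sigma>)"

section \<open>Typing\<close>

text \<open>has_ty S \<Sigma> Bv Bn t tau: t has type tau in context \<Sigma>, where Bv (resp. Bn)
  lists the types of the enclosing bound variables (resp. bound name-symbols).\<close>
inductive has_ty :: "('c, 'f, 'p, 'd, 'n) signature \<Rightarrow> ('d, 'n) ctx \<Rightarrow> ('d, 'n) ty list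
    \<Rightarrow> 'n list \<Rightarrow> ('c, 'f) tm \<Rightarrow> ('d, 'n) ty \<Rightarrow> bool"
  for S :: "('c, 'f, 'p, 'd, 'n) signature" where
  T_Var: "CVar x \<tau> \<in> set \<Sigma> \<Longrightarrow> has_ty S \<Sigma> Bv Bn (Var x) \<tau>"
| T_BVar: "i < length Bv \<Longrightarrow> has_ty S \<Sigma> Bv Bn (BVar i) (Bv ! i)"
| T_Nm: "CNm a \<nu> \<in> set \<Sigma> \<Longrightarrow> has_ty S \<Sigma> Bv Bn (Nm a) (TName \<nu>)"
| T_BNm: "i < length Bn \<Longrightarrow> has_ty S \<Sigma> Bv Bn (BNm i) (TName (Bn ! i))"
| T_Const: "has_ty S \<Sigma> Bv Bn (Const c) (TData (sig_c S c))"
| T_Fn: "sig_f S f = (\<tau>s, \<delta>) \<Longrightarrow> list_all2 (has_ty S \<Sigma> Bv Bn) ts \<tau>s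
         \<Longrightarrow> has_ty S \<Sigma> Bv Bn (Fn f ts) (TData \<delta>)"
| T_Swap: "has_ty S \<Sigma> Bv Bn a (TName \<nu>) \<Longrightarrow> has_ty S \<Sigma> Bv Bn b (TName \<nu>) \<Longrightarrow> has_ty S \<Sigma> Bv Bn t \<tau>
         \<Longrightarrow> has_ty S \<Sigma> Bv Bn (Swap a b t) \<tau>"
| T_Abst: "has_ty S \<Sigma> Bv Bn a (TName \<nu>) \<Longrightarrow> has_ty S \<Sigma> Bv Bn t \<tau>
         \<Longrightarrow> has_ty S \<Sigma> Bv Bn (Abst a t) (TAbs \<nu> \<tau>)"

text \<open>Sigma |- t : tau  (t in Tm_Sigma, no dangling bound indices).\<close>
abbreviation tmty :: "('c, 'f, 'p, 'd, 'n) signature \<Rightarrow> ('d, 'n) ctx \<Rightarrow> ('c, 'f) tm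
    \<Rightarrow> ('d, 'n) ty \<Rightarrow> bool" where
  "tmty S \<Sigma> t \<tau> \<equiv> has_ty S \<Sigma> [] [] t \<tau>"

inductive wff :: "('c, 'f, 'p, 'd, 'n) signature \<Rightarrow> ('d, 'n) ctx \<Rightarrow> ('d, 'n) ty list
    \<Rightarrow> 'n list \<Rightarrow> ('d, 'n, 'c, 'f, 'p) fm \<Rightarrow> bool"
  for S :: "('c, 'f, 'p, 'd, 'n) signature" where
  W_Top: "wff S \<Sigma> Bv Bn Top"
| W_Bot: "wff S \<Sigma> Bv Bn Bot"
| W_Pred: "list_all2 (has_ty S \<Sigma> Bv Bn) ts (sig_p S p) \<Longrightarrow> wff S \<Sigma> Bv Bn (Pred p ts)"
| W_Eq: "has_ty S \<Sigma> Bv Bn t \<tau> \<Longrightarrow> has_ty S \<Sigma> Bv Bn u \<tau> \<Longrightarrow> wff S \<Sigma> Bv Bn (Eq t u)"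
| W_Fresh: "has_ty S \<Sigma> Bv Bn a (TName \<nu>) \<Longrightarrow> has_ty S \<Sigma> Bv Bn t \<tau> \<Longrightarrow> wff S \<Sigma> Bv Bn (Fresh a t)"
| W_Conj: "wff S \<Sigma> Bv Bn \<phi> \<Longrightarrow> wff S \<Sigma> Bv Bn \<psi> \<Longrightarrow> wff S \<Sigma> Bv Bn (Conj \<phi> \<psi>)"
| W_Disj: "wff S \<Sigma> Bv Bn \<phi> \<Longrightarrow> wff S \<Sigma> Bv Bn \<psi> \<Longrightarrow> wff S \<Sigma> Bv Bn (Disj \<phi> \<psi>)"
| W_Imp: "wff S \<Sigma> Bv Bn \<phi> \<Longrightarrow> wff S \<Sigma> Bv Bn \<psi> \<Longrightarrow> wff S \<Sigma> Bv Bn (Imp \<phi> \<psi>)"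
| W_All: "wff S \<Sigma> (\<tau> # Bv) Bn \<phi> \<Longrightarrow> wff S \<Sigma> Bv Bn (All \<tau> \<phi>)"
| W_Ex: "wff S \<Sigma> (\<tau> # Bv) Bn \<phi> \<Longrightarrow> wff S \<Sigma> Bv Bn (Ex \<tau> \<phi>)"
| W_New: "wff S \<Sigma> Bv (\<nu> # Bn) \<phi> \<Longrightarrow> wff S \<Sigma> Bv Bn (New \<nu> \<phi>)"

definition wf_seq :: "('c, 'f, 'p, 'd, 'n) signature \<Rightarrow> ('d, 'n) ctx
    \<Rightarrow> ('d, 'n, 'c, 'f, 'p) fm multiset \<Rightarrow> ('d, 'n, 'c, 'f, 'p) fm multiset \<Rightarrow> bool" where
  "wf_seq S \<Sigma> \<Gamma> \<Delta> \<longleftrightarrow> ctx_ok \<Sigma> \<and> (\<forall>\<phi> \<in># \<Gamma> + \<Delta>. wff S \<Sigma> [] [] \<phi>)"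

section \<open>Substitution (opening of binders)\<close>

fun open_tv :: "nat \<Rightarrow> ('c, 'f) tm \<Rightarrow> ('c, 'f) tm \<Rightarrow> ('c, 'f) tm" where
  "open_tv k s (Var x) = Var x"
| "open_tv k s (BVar i) = (if i = k then s else BVar i)"
| "open_tv k s (Nm a) = Nm a"
| "open_tv k s (BNm i) = BNm i"
| "open_tv k s (Const c) = Const c"
| "open_tv k s (Fn f ts) = Fn f (map (open_tv k s) ts)"
| "open_tv k s (Swap a b t) = Swap (open_tv k s a) (open_tv k s b) (open_tv k s t)"
| "open_tv k s (Abst a t) = Abst (open_tv k s a) (open_tv k s t)"

fun open_tn :: "nat \<Rightarrow> ('c, 'f) tm \<Rightarrow> ('c, 'f) tm \<Rightarrow> ('c, 'f) tm" where
  "open_tn k s (Var x) = Var x"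
| "open_tn k s (BVar i) = BVar i"
| "open_tn k s (Nm a) = Nm a"
| "open_tn k s (BNm i) = (if i = k then s else BNm i)"
| "open_tn k s (Const c) = Const c"
| "open_tn k s (Fn f ts) = Fn f (map (open_tn k s) ts)"
| "open_tn k s (Swap a b t) = Swap (open_tn k s a) (open_tn k s b) (open_tn k s t)"
| "open_tn k s (Abst a t) = Abst (open_tn k s a) (open_tn k s t)"

fun open_fv :: "nat \<Rightarrow> ('c, 'f) tm \<Rightarrow> ('d, 'n, 'c, 'f, 'p) fm \<Rightarrow> ('d, 'n, 'c, 'f, 'p) fm" where
  "open_fv k s Top = Top"
| "open_fv k s Bot = Bot"
| "open_fv k s (Pred p ts) = Pred p (map (open_tv k s) ts)"
| "open_fv k s (Eq t u) = Eq (open_tv k s t) (open_tv k s u)"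
| "open_fv k s (Fresh a t) = Fresh (open_tv k s a) (open_tv k s t)"
| "open_fv k s (Conj \<phi> \<psi>) = Conj (open_fv k s \<phi>) (open_fv k s \<psi>)"
| "open_fv k s (Disj \<phi> \<psi>) = Disj (open_fv k s \<phi>) (open_fv k s \<psi>)"
| "open_fv k s (Imp \<phi> \<psi>) = Imp (open_fv k s \<phi>) (open_fv k s \<psi>)"
| "open_fv k s (All \<tau> \<phi>) = All \<tau> (open_fv (Suc k) s \<phi>)"
| "open_fv k s (Ex \<tau> \<phi>) = Ex \<tau> (open_fv (Suc k) s \<phi>)"
| "open_fv k s (New \<nu> \<phi>) = New \<nu> (open_fv k s \<phi>)"

fun open_fn :: "nat \<Rightarrow> ('c, 'f) tm \<Rightarrow> ('d, 'n, 'c, 'f, 'p) fm \<Rightarrow> ('d, 'n, 'c, 'f, 'p) fm" where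
  "open_fn k s Top = Top"
| "open_fn k s Bot = Bot"
| "open_fn k s (Pred p ts) = Pred p (map (open_tn k s) ts)"
| "open_fn k s (Eq t u) = Eq (open_tn k s t) (open_tn k s u)"
| "open_fn k s (Fresh a t) = Fresh (open_tn k s a) (open_tn k s t)"
| "open_fn k s (Conj \<phi> \<psi>) = Conj (open_fn k s \<phi>) (open_fn k s \<psi>)"
| "open_fn k s (Disj \<phi> \<psi>) = Disj (open_fn k s \<phi>) (open_fn k s \<psi>)"
| "open_fn k s (Imp \<phi> \<psi>) = Imp (open_fn k s \<phi>) (open_fn k s \<psi>)"
| "open_fn k s (All \<tau> \<phi>) = All \<tau> (open_fn k s \<phi>)"
| "open_fn k s (Ex \<tau> \<phi>) = Ex \<tau> (open_fn k s \<phi>)"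
| "open_fn k s (New \<nu> \<phi>) = New \<nu> (open_fn (Suc k) s \<phi>)"

text \<open>phi[t/x] for the body phi of a quantifier, and phi[b/a] for the body of a New.\<close>
abbreviation inst :: "('d, 'n, 'c, 'f, 'p) fm \<Rightarrow> ('c, 'f) tm \<Rightarrow> ('d, 'n, 'c, 'f, 'p) fm" where
  "inst \<phi> t \<equiv> open_fv 0 t \<phi>"

abbreviation inst_nm :: "('d, 'n, 'c, 'f, 'p) fm \<Rightarrow> nat \<Rightarrow> ('d, 'n, 'c, 'f, 'p) fm" where
  "inst_nm \<phi> a \<equiv> open_fn 0 (Nm a) \<phi>"

fun is_atom :: "('d, 'n, 'c, 'f, 'p) fm \<Rightarrow> bool" where
  "is_atom (Pred _ _) = True"
| "is_atom (Eq _ _) = True"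
| "is_atom (Fresh _ _) = True"
| "is_atom _ = False"

section \<open>|Sigma|: the freshness facts recorded by a context\<close>

definition ctx_fresh :: "('c, 'f, 'p, 'd, 'n) signature \<Rightarrow> ('d, 'n) ctx
    \<Rightarrow> ('d, 'n, 'c, 'f, 'p) fm set" where
  "ctx_fresh S \<Sigma> = {Fresh (Nm a) t | a t. \<exists>\<Sigma>1 \<Sigma>2 \<nu> \<tau>.
      \<Sigma> = \<Sigma>1 @ CNm a \<nu> # \<Sigma>2 \<and> tmty S \<Sigma>1 t \<tau>}"

section \<open>Instances of the nonlogical axiom schemes  P1 & ... & Pn \<supset> Q1 | ... | Qm\<close>

text \<open>Swap/eq/fresh are symbols of the signature; E2 is
  read as covering every function symbol with data-type result (including
  swap at a data type) and E3 every predicate symbol (including eq and fresh).\<close>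
inductive nl_axiom :: "('c, 'f, 'p, 'd, 'n) signature \<Rightarrow> ('d, 'n) ctx
    \<Rightarrow> ('d, 'n, 'c, 'f, 'p) fm list \<Rightarrow> ('d, 'n, 'c, 'f, 'p) fm list \<Rightarrow> bool"
  for S :: "('c, 'f, 'p, 'd, 'n) signature" where
  S1: "tmty S \<Sigma> a (TName \<nu>) \<Longrightarrow> tmty S \<Sigma> x \<tau> \<Longrightarrow>
       nl_axiom S \<Sigma> [] [Eq (Swap a a x) x]"
| S2: "tmty S \<Sigma> a (TName \<nu>) \<Longrightarrow> tmty S \<Sigma> b (TName \<nu>) \<Longrightarrow> tmty S \<Sigma> x \<tau> \<Longrightarrow>
       nl_axiom S \<Sigma> [] [Eq (Swap a b (Swap a b x)) x]"
| S3: "tmty S \<Sigma> a (TName \<nu>) \<Longrightarrow> tmty S \<Sigma> b (TName \<nu>) \<Longrightarrow>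
       nl_axiom S \<Sigma> [] [Eq (Swap a b a) b]"
| E1: "tmty S \<Sigma> a (TName \<nu>) \<Longrightarrow> tmty S \<Sigma> b (TName \<nu>) \<Longrightarrow>
       nl_axiom S \<Sigma> [] [Eq (Swap a b (Const c)) (Const c)]"
| E2: "tmty S \<Sigma> a (TName \<nu>) \<Longrightarrow> tmty S \<Sigma> b (TName \<nu>) \<Longrightarrow> tmty S \<Sigma> (Fn f ts) \<tau> \<Longrightarrow>
       nl_axiom S \<Sigma> [] [Eq (Swap a b (Fn f ts)) (Fn f (map (Swap a b) ts))]"
| E2_swap: "tmty S \<Sigma> a (TName \<nu>) \<Longrightarrow> tmty S \<Sigma> b (TName \<nu>) \<Longrightarrow>
       tmty S \<Sigma> (Swap c d t) (TData \<delta>) \<Longrightarrow>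
       nl_axiom S \<Sigma> [] [Eq (Swap a b (Swap c d t)) (Swap (Swap a b c) (Swap a b d) (Swap a b t))]"
| E3: "tmty S \<Sigma> a (TName \<nu>) \<Longrightarrow> tmty S \<Sigma> b (TName \<nu>) \<Longrightarrow> wff S \<Sigma> [] [] (Pred p ts) \<Longrightarrow>
       nl_axiom S \<Sigma> [Pred p ts] [Pred p (map (Swap a b) ts)]"
| E3_eq: "tmty S \<Sigma> a (TName \<nu>) \<Longrightarrow> tmty S \<Sigma> b (TName \<nu>) \<Longrightarrow> wff S \<Sigma> [] [] (Eq t u) \<Longrightarrow>
       nl_axiom S \<Sigma> [Eq t u] [Eq (Swap a b t) (Swap a b u)]"
| E3_fresh: "tmty S \<Sigma> a (TName \<nu>) \<Longrightarrow> tmty S \<Sigma> b (TName \<nu>) \<Longrightarrow> wff S \<Sigma> [] [] (Fresh t u) \<Longrightarrow>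
       nl_axiom S \<Sigma> [Fresh t u] [Fresh (Swap a b t) (Swap a b u)]"
| F1: "tmty S \<Sigma> a (TName \<nu>) \<Longrightarrow> tmty S \<Sigma> b (TName \<nu>) \<Longrightarrow> tmty S \<Sigma> x \<tau> \<Longrightarrow>
       nl_axiom S \<Sigma> [Fresh a x, Fresh b x] [Eq (Swap a b x) x]"
| F2: "tmty S \<Sigma> a (TName \<nu>) \<Longrightarrow> tmty S \<Sigma> b (TName \<nu>') \<Longrightarrow> \<nu> \<noteq> \<nu>' \<Longrightarrow>
       nl_axiom S \<Sigma> [] [Fresh a b]"
| F3: "tmty S \<Sigma> a (TName \<nu>) \<Longrightarrow>
       nl_axiom S \<Sigma> [Fresh a a] []"
| F4: "tmty S \<Sigma> a (TName \<nu>) \<Longrightarrow> tmty S \<Sigma> b (TName \<nu>) \<Longrightarrow>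
       nl_axiom S \<Sigma> [] [Fresh a b, Eq a b]"
| A1: "tmty S \<Sigma> a (TName \<nu>) \<Longrightarrow> tmty S \<Sigma> b (TName \<nu>) \<Longrightarrow> tmty S \<Sigma> x \<tau> \<Longrightarrow> tmty S \<Sigma> y \<tau> \<Longrightarrow>
       nl_axiom S \<Sigma> [Fresh a y, Eq x (Swap a b y)] [Eq (Abst a x) (Abst b y)]"

section \<open>The sequent calculus NL=>\<close>

text \<open>Every sequent of a
  derivation is required to be well-formed (condition wf_seq on each conclusion).
  Contexts are extended on the right: \<Sigma>,x:\<sigma> is \<Sigma> @ [CVar x \<sigma>], \<Sigma>#a:\<nu> is
  \<Sigma> @ [CNm a \<nu>].\<close>
inductive deriv :: "('c, 'f, 'p, 'd, 'n) signature \<Rightarrow> ('d, 'n) ctx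
    \<Rightarrow> ('d, 'n, 'c, 'f, 'p) fm multiset \<Rightarrow> ('d, 'n, 'c, 'f, 'p) fm multiset \<Rightarrow> bool"
  for S :: "('c, 'f, 'p, 'd, 'n) signature" where
  Ax: "wf_seq S \<Sigma> (add_mset P \<Gamma>) (add_mset P \<Delta>) \<Longrightarrow> is_atom P \<Longrightarrow>
       deriv S \<Sigma> (add_mset P \<Gamma>) (add_mset P \<Delta>)"
| TopR: "wf_seq S \<Sigma> \<Gamma> (add_mset Top \<Delta>) \<Longrightarrow> deriv S \<Sigma> \<Gamma> (add_mset Top \<Delta>)"
| BotL: "wf_seq S \<Sigma> (add_mset Bot \<Gamma>) \<Delta> \<Longrightarrow> deriv S \<Sigma> (add_mset Bot \<Gamma>) \<Delta>"
| ConjL: "wf_seq S \<Sigma> (add_mset (Conj \<phi> \<psi>) \<Gamma>) \<Delta> \<Longrightarrow>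
       deriv S \<Sigma> (add_mset \<phi> (add_mset \<psi> \<Gamma>)) \<Delta> \<Longrightarrow>
       deriv S \<Sigma> (add_mset (Conj \<phi> \<psi>) \<Gamma>) \<Delta>"
| ConjR: "wf_seq S \<Sigma> \<Gamma> (add_mset (Conj \<phi> \<psi>) \<Delta>) \<Longrightarrow>
       deriv S \<Sigma> \<Gamma> (add_mset \<phi> \<Delta>) \<Longrightarrow> deriv S \<Sigma> \<Gamma> (add_mset \<psi> \<Delta>) \<Longrightarrow>
       deriv S \<Sigma> \<Gamma> (add_mset (Conj \<phi> \<psi>) \<Delta>)"
| DisjL: "wf_seq S \<Sigma> (add_mset (Disj \<phi> \<psi>) \<Gamma>) \<Delta> \<Longrightarrow>
       deriv S \<Sigma> (add_mset \<phi> \<Gamma>) \<Delta> \<Longrightarrow> deriv S \<Sigma> (add_mset \<psi> \<Gamma>) \<Delta> \<Longrightarrow>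
       deriv S \<Sigma> (add_mset (Disj \<phi> \<psi>) \<Gamma>) \<Delta>"
| DisjR: "wf_seq S \<Sigma> \<Gamma> (add_mset (Disj \<phi> \<psi>) \<Delta>) \<Longrightarrow>
       deriv S \<Sigma> \<Gamma> (add_mset \<phi> (add_mset \<psi> \<Delta>)) \<Longrightarrow>
       deriv S \<Sigma> \<Gamma> (add_mset (Disj \<phi> \<psi>) \<Delta>)"
| ImpL: "wf_seq S \<Sigma> (add_mset (Imp \<phi> \<psi>) \<Gamma>) \<Delta> \<Longrightarrow>
       deriv S \<Sigma> \<Gamma> (add_mset \<phi> \<Delta>) \<Longrightarrow> deriv S \<Sigma> (add_mset \<psi> \<Gamma>) \<Delta> \<Longrightarrow>
       deriv S \<Sigma> (add_mset (Imp \<phi> \<psi>) \<Gamma>) \<Delta>"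
| ImpR: "wf_seq S \<Sigma> \<Gamma> (add_mset (Imp \<phi> \<psi>) \<Delta>) \<Longrightarrow>
       deriv S \<Sigma> (add_mset \<phi> \<Gamma>) (add_mset \<psi> \<Delta>) \<Longrightarrow>
       deriv S \<Sigma> \<Gamma> (add_mset (Imp \<phi> \<psi>) \<Delta>)"
| AllL: "wf_seq S \<Sigma> (add_mset (All \<sigma> \<phi>) \<Gamma>) \<Delta> \<Longrightarrow> tmty S \<Sigma> t \<sigma> \<Longrightarrow>
       deriv S \<Sigma> (add_mset (All \<sigma> \<phi>) (add_mset (inst \<phi> t) \<Gamma>)) \<Delta> \<Longrightarrow>
       deriv S \<Sigma> (add_mset (All \<sigma> \<phi>) \<Gamma>) \<Delta>"
| AllR: "wf_seq S \<Sigma> \<Gamma> (add_mset (All \<sigma> \<phi>) \<Delta>) \<Longrightarrow> \<not> var_in x \<Sigma> \<Longrightarrow>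
       deriv S (\<Sigma> @ [CVar x \<sigma>]) \<Gamma> (add_mset (inst \<phi> (Var x)) \<Delta>) \<Longrightarrow>
       deriv S \<Sigma> \<Gamma> (add_mset (All \<sigma> \<phi>) \<Delta>)"
| ExL: "wf_seq S \<Sigma> (add_mset (Ex \<sigma> \<phi>) \<Gamma>) \<Delta> \<Longrightarrow> \<not> var_in x \<Sigma> \<Longrightarrow>
       deriv S (\<Sigma> @ [CVar x \<sigma>]) (add_mset (inst \<phi> (Var x)) \<Gamma>) \<Delta> \<Longrightarrow>
       deriv S \<Sigma> (add_mset (Ex \<sigma> \<phi>) \<Gamma>) \<Delta>"
| ExR: "wf_seq S \<Sigma> \<Gamma> (add_mset (Ex \<sigma> \<phi>) \<Delta>) \<Longrightarrow> tmty S \<Sigma> t \<sigma> \<Longrightarrow>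
       deriv S \<Sigma> \<Gamma> (add_mset (Ex \<sigma> \<phi>) (add_mset (inst \<phi> t) \<Delta>)) \<Longrightarrow>
       deriv S \<Sigma> \<Gamma> (add_mset (Ex \<sigma> \<phi>) \<Delta>)"
| NewR: "wf_seq S \<Sigma> \<Gamma> (add_mset (New \<nu> \<phi>) \<Delta>) \<Longrightarrow> \<not> nm_in a \<Sigma> \<Longrightarrow>
       deriv S (\<Sigma> @ [CNm a \<nu>]) \<Gamma> (add_mset (inst_nm \<phi> a) \<Delta>) \<Longrightarrow>
       deriv S \<Sigma> \<Gamma> (add_mset (New \<nu> \<phi>) \<Delta>)"
| NewL: "wf_seq S \<Sigma> (add_mset (New \<nu> \<phi>) \<Gamma>) \<Delta> \<Longrightarrow> \<not> nm_in a \<Sigma> \<Longrightarrow>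
       deriv S (\<Sigma> @ [CNm a \<nu>]) (add_mset (inst_nm \<phi> a) \<Gamma>) \<Delta> \<Longrightarrow>
       deriv S \<Sigma> (add_mset (New \<nu> \<phi>) \<Gamma>) \<Delta>"
| EqR: "wf_seq S \<Sigma> \<Gamma> \<Delta> \<Longrightarrow>
       deriv S \<Sigma> (add_mset (Eq t t) \<Gamma>) \<Delta> \<Longrightarrow>
       deriv S \<Sigma> \<Gamma> \<Delta>"
| EqS: "wf_seq S \<Sigma> (add_mset (Eq t u) (add_mset (inst P t) \<Gamma>)) \<Delta> \<Longrightarrow> is_atom P \<Longrightarrow>
       deriv S \<Sigma> (add_mset (Eq t u) (add_mset (inst P t) (add_mset (inst P u) \<Gamma>))) \<Delta> \<Longrightarrow>
       deriv S \<Sigma> (add_mset (Eq t u) (add_mset (inst P t) \<Gamma>)) \<Delta>"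
| Axiom: "wf_seq S \<Sigma> (\<Gamma> + mset Ps) \<Delta> \<Longrightarrow> nl_axiom S \<Sigma> Ps Qs \<Longrightarrow>
       (\<forall>Q \<in> set Qs. deriv S \<Sigma> (add_mset Q (\<Gamma> + mset Ps)) \<Delta>) \<Longrightarrow>
       deriv S \<Sigma> (\<Gamma> + mset Ps) \<Delta>"
| A2: "wf_seq S \<Sigma> (add_mset (Eq (Abst a t) (Abst b u)) \<Gamma>) \<Delta> \<Longrightarrow>
       deriv S \<Sigma> (add_mset (Eq (Abst a t) (Abst b u)) (add_mset (Eq a b) (add_mset (Eq t u) \<Gamma>))) \<Delta> \<Longrightarrow>
       deriv S \<Sigma> (add_mset (Eq (Abst a t) (Abst b u)) (add_mset (Fresh a u) (add_mset (Eq t (Swap a b u)) \<Gamma>))) \<Delta> \<Longrightarrow>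
       deriv S \<Sigma> (add_mset (Eq (Abst a t) (Abst b u)) \<Gamma>) \<Delta>"
| A3: "wf_seq S \<Sigma> \<Gamma> \<Delta> \<Longrightarrow> tmty S \<Sigma> t (TAbs \<nu> \<sigma>) \<Longrightarrow>
       \<not> var_in a \<Sigma> \<Longrightarrow> \<not> var_in x \<Sigma> \<Longrightarrow> a \<noteq> x \<Longrightarrow>
       deriv S (\<Sigma> @ [CVar a (TName \<nu>), CVar x \<sigma>]) (add_mset (Eq t (Abst (Var a) (Var x))) \<Gamma>) \<Delta> \<Longrightarrow>
       deriv S \<Sigma> \<Gamma> \<Delta>"
| FreshNm: "wf_seq S \<Sigma> \<Gamma> \<Delta> \<Longrightarrow> \<not> nm_in a \<Sigma> \<Longrightarrow>
       deriv S (\<Sigma> @ [CNm a \<nu>]) \<Gamma> \<Delta> \<Longrightarrow>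
       deriv S \<Sigma> \<Gamma> \<Delta>"
| CtxFresh: "wf_seq S \<Sigma> \<Gamma> \<Delta> \<Longrightarrow> Fresh (Nm a) t \<in> ctx_fresh S \<Sigma> \<Longrightarrow>
       deriv S \<Sigma> (add_mset (Fresh (Nm a) t) \<Gamma>) \<Delta> \<Longrightarrow>
       deriv S \<Sigma> \<Gamma> \<Delta>"

end

theory Submission
  imports Defs
begin


datatype 'n val = VA "'n \<times> nat" | VU | VB nat | VL "'n val"

definition swap_at :: "'a \<Rightarrow> 'a \<Rightarrow> 'a \<Rightarrow> 'a" where
  "swap_at p q r = (if r = p then q else if r = q then p else r)"

fun perm :: "'n \<times> nat \<Rightarrow> 'n \<times> nat \<Rightarrow> 'n val \<Rightarrow> 'n val" where
  "perm p q (VA r) = VA (swap_at p q r)"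
| "perm p q VU = VU"
| "perm p q (VB i) = VB i"
| "perm p q (VL v) = VL (perm p q v)"

fun atoms :: "'n val \<Rightarrow> ('n \<times> nat) set" where
  "atoms (VA r) = {r}"
| "atoms VU = {}"
| "atoms (VB i) = {}"
| "atoms (VL v) = atoms v"

fun clo :: "nat \<Rightarrow> 'n \<times> nat \<Rightarrow> 'n val \<Rightarrow> 'n val" where
  "clo k p (VA r) = (if r = p then VB k else VA r)"
| "clo k p VU = VU"
| "clo k p (VB i) = VB i"
| "clo k p (VL v) = VL (clo (Suc k) p v)"

fun lc :: "nat \<Rightarrow> 'n val \<Rightarrow> bool" where
  "lc k (VB i) = (i < k)"
| "lc k (VL v) = lc (Suc k) v"
| "lc k _ = True"

definition swp :: "'n val \<Rightarrow> 'n val \<Rightarrow> 'n val \<Rightarrow> 'n val" where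
  "swp x y v = (case (x, y) of (VA p, VA q) \<Rightarrow> perm p q v | _ \<Rightarrow> v)"

definition absv :: "'n val \<Rightarrow> 'n val \<Rightarrow> 'n val" where
  "absv x v = (case x of VA p \<Rightarrow> VL (clo 0 p v) | _ \<Rightarrow> VU)"

definition frv :: "'n val \<Rightarrow> 'n val \<Rightarrow> bool" where
  "frv x v = (case x of VA p \<Rightarrow> p \<notin> atoms v | _ \<Rightarrow> False)"

fun indom :: "'n val \<Rightarrow> ('d, 'n) ty \<Rightarrow> bool" where
  "indom v (TData d) = (v = VU)"
| "indom v (TName \<nu>) = (\<exists>n. v = VA (\<nu>, n))"
| "indom v (TAbs \<nu> \<tau>) = (\<exists>n x. indom x \<tau> \<and> v = VL (clo 0 (\<nu>, n) x))"

lemma atoms_clo[simp]: "atoms (clo k p v) = atoms v - {p}"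
  by (induction v arbitrary: k) auto

lemma clo_inj: "clo k p v = clo k p w \<Longrightarrow> lc k v \<Longrightarrow> lc k w \<Longrightarrow> v = w"
proof (induction v arbitrary: w k)
  case (VA r) then show ?case by (cases w) (auto split: if_splits)
next
  case VU then show ?case by (cases w) (auto split: if_splits)
next
  case (VB i) then show ?case by (cases w) (auto split: if_splits)
next
  case (VL v) then show ?case by (cases w) (auto split: if_splits)
qed

lemma swap_at_simps[simp]: "swap_at p q p = q" "swap_at p q q = p" "swap_at p p r = r"
  "swap_at p q (swap_at p q r) = r"
  by (auto simp: swap_at_def)

lemma swap_at_inj[simp]: "(swap_at p q r = swap_at p q s) = (r = s)"
  by (auto simp: swap_at_def)

lemma perm_clo: "perm p q (clo k r v) = clo k (swap_at p q r) (perm p q v)"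
  by (induction v arbitrary: k) auto

lemma perm_fresh: "p \<notin> atoms v \<Longrightarrow> q \<notin> atoms v \<Longrightarrow> perm p q v = v"
  by (induction v) (auto simp: swap_at_def)

lemma perm_invol[simp]: "perm p q (perm p q v) = v"
  by (induction v) auto

lemma perm_id[simp]: "perm p p v = v"
  by (induction v) auto

lemma atoms_perm[simp]: "atoms (perm p q v) = swap_at p q ` atoms v"
  by (induction v) auto

lemma finite_atoms[simp]: "finite (atoms v)"
  by (induction v) auto

lemma lc_clo: "lc k v \<Longrightarrow> lc (Suc k) (clo k p v)"
  by (induction v arbitrary: k) auto

lemma lc_perm[simp]: "lc k (perm p q v) = lc k v"
  by (induction v arbitrary: k) auto

lemma perm_perm: "perm p q (perm c d v) = perm (swap_at p q c) (swap_at p q d) (perm p q v)"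
  by (induction v) (auto simp: swap_at_def)

lemma indom_lc: "indom v \<tau> \<Longrightarrow> lc 0 v"
  by (induction \<tau> arbitrary: v) (auto intro!: lc_clo[where k=0, simplified])

lemma swap_at_tag: "fst p = fst q \<Longrightarrow> fst (swap_at p q r) = fst r"
  by (auto simp: swap_at_def)

lemma indom_perm: "fst p = fst q \<Longrightarrow> indom v \<tau> \<Longrightarrow> indom (perm p q v) \<tau>"
proof (induction \<tau> arbitrary: v)
  case (TName \<nu>)
  then obtain n where "v = VA (\<nu>, n)" by auto
  then show ?case using swap_at_tag[OF TName(1), of "(\<nu>,n)"]
    by (auto intro: exI[of _ "snd (swap_at p q (\<nu>, n))"] simp: prod_eq_iff)
next
  case (TAbs \<nu> \<tau>)
  then obtain n x where x: "indom x \<tau>" "v = VL (clo 0 (\<nu>, n) x)" by auto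
  have t: "fst (swap_at p q (\<nu>, n)) = \<nu>" using swap_at_tag[OF TAbs(2), of "(\<nu>,n)"] by simp
  have e: "swap_at p q (\<nu>, n) = (\<nu>, snd (swap_at p q (\<nu>, n)))" using t by (metis prod.collapse)
  have "perm p q v = VL (clo 0 (\<nu>, snd (swap_at p q (\<nu>, n))) (perm p q x))"
    by (simp add: x perm_clo e[symmetric])
  then show ?case using TAbs x by auto
qed auto


fun tev :: "(nat \<Rightarrow> 'n val) \<Rightarrow> (nat \<Rightarrow> 'n val) \<Rightarrow> (nat \<Rightarrow> 'n val) \<Rightarrow> ('c, 'f) tm \<Rightarrow> 'n val" where
  "tev rv rn b (Var x) = rv x"
| "tev rv rn b (BVar i) = b i"
| "tev rv rn b (Nm a) = rn a"
| "tev rv rn b (BNm i) = VU"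
| "tev rv rn b (Const c) = VU"
| "tev rv rn b (Fn f ts) = VU"
| "tev rv rn b (Swap a c t) = swp (tev rv rn b a) (tev rv rn b c) (tev rv rn b t)"
| "tev rv rn b (Abst a t) = absv (tev rv rn b a) (tev rv rn b t)"

lemma tev_open: "tev rv rn b (open_tv k s t) = tev rv rn (b(k := tev rv rn b s)) t"
  by (induction t) auto

fun holdsb :: "(nat \<Rightarrow> 'n val) \<Rightarrow> (nat \<Rightarrow> 'n val) \<Rightarrow> (nat \<Rightarrow> 'n val) \<Rightarrow> ('d, 'n, 'c, 'f, 'p) fm \<Rightarrow> bool" where
  "holdsb rv rn b (Pred p ts) = True"
| "holdsb rv rn b (Eq t u) = (tev rv rn b t = tev rv rn b u)"
| "holdsb rv rn b (Fresh a t) = frv (tev rv rn b a) (tev rv rn b t)"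
| "holdsb rv rn b _ = False"

abbreviation "holds rv rn \<equiv> holdsb rv rn (\<lambda>_. VU)"

lemma holds_open: "is_atom P \<Longrightarrow> holdsb rv rn b (open_fv 0 s P) = holdsb rv rn (b(0 := tev rv rn b s)) P"
  by (cases P) (auto simp: tev_open)

lemma atom_open: "is_atom P \<Longrightarrow> is_atom (open_fv k s P)"
  by (cases P) auto

definition valid :: "('d, 'n) ctx \<Rightarrow> (nat \<Rightarrow> 'n val) \<Rightarrow> (nat \<Rightarrow> 'n val) \<Rightarrow> bool" where
  "valid \<Sigma> rv rn \<longleftrightarrow> (\<forall>x \<tau>. CVar x \<tau> \<in> set \<Sigma> \<longrightarrow> indom (rv x) \<tau>)
    \<and> (\<forall>a \<nu>. CNm a \<nu> \<in> set \<Sigma> \<longrightarrow> (\<exists>n. rn a = VA (\<nu>, n)))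
    \<and> (\<forall>\<Sigma>1 a \<nu> \<Sigma>2. \<Sigma> = \<Sigma>1 @ CNm a \<nu> # \<Sigma>2 \<longrightarrow>
         (\<forall>x \<tau>. CVar x \<tau> \<in> set \<Sigma>1 \<longrightarrow> frv (rn a) (rv x))
       \<and> (\<forall>b \<nu>'. CNm b \<nu>' \<in> set \<Sigma>1 \<longrightarrow> frv (rn a) (rn b)))"

lemma ty_indom: "has_ty S \<Sigma> Bv Bn t \<tau> \<Longrightarrow> Bv = [] \<Longrightarrow> Bn = [] \<Longrightarrow> valid \<Sigma> rv rn \<Longrightarrow>
  indom (tev rv rn b t) \<tau>"
proof (induction rule: has_ty.induct)
  case (T_Swap \<Sigma> Bv Bn a \<nu> c t \<tau>)
  then obtain n m where "tev rv rn b a = VA (\<nu>, n)" "tev rv rn b c = VA (\<nu>, m)" by auto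
  then show ?case using T_Swap by (auto simp: swp_def intro!: indom_perm)
next
  case (T_Abst \<Sigma> Bv Bn a \<nu> t \<tau>)
  then obtain n where "tev rv rn b a = VA (\<nu>, n)" by auto
  then show ?case using T_Abst by (auto simp: absv_def)
qed (auto simp: valid_def)

lemma ty_agree: "has_ty S \<Sigma> Bv Bn t \<tau> \<Longrightarrow> Bv = [] \<Longrightarrow>
  (\<forall>x \<tau>. CVar x \<tau> \<in> set \<Sigma> \<longrightarrow> rv x = rv' x) \<Longrightarrow> (\<forall>a \<nu>. CNm a \<nu> \<in> set \<Sigma> \<longrightarrow> rn a = rn' a) \<Longrightarrow>
  tev rv rn b t = tev rv' rn' b t"
  by (induction rule: has_ty.induct) auto

lemma ty_atoms: "has_ty S \<Sigma> Bv Bn t \<tau> \<Longrightarrow> Bv = [] \<Longrightarrow>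
  (\<forall>x \<tau>. CVar x \<tau> \<in> set \<Sigma> \<longrightarrow> p \<notin> atoms (rv x)) \<Longrightarrow> (\<forall>a \<nu>. CNm a \<nu> \<in> set \<Sigma> \<longrightarrow> p \<notin> atoms (rn a)) \<Longrightarrow>
  p \<notin> atoms (tev rv rn b t)"
proof (induction rule: has_ty.induct)
  case (T_Swap \<Sigma> Bv Bn a \<nu> c t \<tau>)
  then show ?case by (auto simp: swp_def swap_at_def split: val.splits)
next
  case (T_Abst \<Sigma> Bv Bn a \<nu> t \<tau>)
  then show ?case by (auto simp: absv_def split: val.splits)
qed auto


lemma name_atom: "has_ty S \<Sigma> [] [] a (TName \<nu>) \<Longrightarrow> valid \<Sigma> rv rn \<Longrightarrow> \<exists>n. tev rv rn b a = VA (\<nu>, n)"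
  using ty_indom[of S \<Sigma> "[]" "[]" a "TName \<nu>" rv rn b] by auto

lemma swp_nonatom: "\<not>(\<exists>p q. A = VA p \<and> B = VA q) \<Longrightarrow> swp A B T = T"
  by (cases A; cases B) (auto simp: swp_def)
lemma swp_atom: "swp (VA p) (VA q) T = perm p q T"
  by (simp add: swp_def)
lemma perm_VA: "(\<exists>r. perm p q C = VA r) = (\<exists>r. C = VA r)"
  by (cases C) auto
lemma perm_perm_gen: "swp A B (swp C D T) = swp (swp A B C) (swp A B D) (swp A B T)"
proof (cases "\<exists>p q. A = VA p \<and> B = VA q")
  case True
  then obtain p q where pq: "A = VA p" "B = VA q" by blast
  show ?thesis
  proof (cases "\<exists>c d. C = VA c \<and> D = VA d")
    case True
    then obtain c d where "C = VA c" "D = VA d" by blast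
    then show ?thesis by (simp add: pq swp_atom perm_perm[of p q c d T])
  next
    case False
    have "\<not>(\<exists>c d. perm p q C = VA c \<and> perm p q D = VA d)"
      using False perm_VA[of p q C] perm_VA[of p q D] by blast
    then show ?thesis using False by (simp add: pq swp_atom swp_nonatom)
  qed
next
  case False
  then show ?thesis by (simp add: swp_nonatom)
qed

lemma swp_same[simp]: "swp A A T = T"
  by (cases A) (auto simp: swp_def)
lemma swp_invol[simp]: "swp A B (swp A B T) = T"
  by (cases A; cases B) (auto simp: swp_def)
lemma swp_VU[simp]: "swp A B VU = VU"
  by (cases A; cases B) (auto simp: swp_def)
lemma swap_at_img[simp]: "(swap_at p q r \<in> swap_at p q ` A) = (r \<in> A)"
  by auto
lemma swp_frv: "frv t u \<Longrightarrow> frv (swp A B t) (swp A B u)"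
  by (cases A; cases B; cases t) (auto simp: swp_def frv_def)
lemma swp_fresh: "frv A X \<Longrightarrow> frv B X \<Longrightarrow> swp A B X = X"
  by (cases A; cases B) (auto simp: swp_def frv_def perm_fresh)

lemma axiom_sound: "nl_axiom S \<Sigma> Ps Qs \<Longrightarrow> valid \<Sigma> rv rn \<Longrightarrow> \<forall>P\<in>set Ps. holds rv rn P \<Longrightarrow>
   \<exists>Q\<in>set Qs. holds rv rn Q"
proof (induction rule: nl_axiom.induct)
  case (S1 \<Sigma> a \<nu> x \<tau>)
  then show ?case by simp
next
  case (S2 \<Sigma> a \<nu> b x \<tau>)
  then show ?case by simp
next
  case (S3 \<Sigma> a \<nu> b)
  then obtain n m where "tev rv rn (\<lambda>_. VU) a = VA (\<nu>, n)" "tev rv rn (\<lambda>_. VU) b = VA (\<nu>, m)"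
    using name_atom[OF S3(1) \<open>valid \<Sigma> rv rn\<close>] name_atom[OF S3(2) \<open>valid \<Sigma> rv rn\<close>] by blast
  then show ?case by (auto simp: swp_def)
next
  case (E1 \<Sigma> a \<nu> b c)
  then show ?case by simp
next
  case (E2 \<Sigma> a \<nu> b f ts \<tau>)
  then show ?case by simp
next
  case (E2_swap \<Sigma> a \<nu> b c d t \<delta>)
  show ?case by (simp, rule perm_perm_gen)
next
  case (E3 \<Sigma> a \<nu> b p ts)
  then show ?case by simp
next
  case (E3_eq \<Sigma> a \<nu> b t u)
  then show ?case by simp
next
  case (E3_fresh \<Sigma> a \<nu> b t u)
  then show ?case by (simp add: swp_frv)
next
  case (F1 \<Sigma> a \<nu> b x \<tau>)
  then show ?case by (simp add: swp_fresh)
next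
  case (F2 \<Sigma> a \<nu> b \<nu>')
  then obtain n m where "tev rv rn (\<lambda>_. VU) a = VA (\<nu>, n)" "tev rv rn (\<lambda>_. VU) b = VA (\<nu>', m)"
    using name_atom[OF F2(1) \<open>valid \<Sigma> rv rn\<close>] name_atom[OF F2(2) \<open>valid \<Sigma> rv rn\<close>] by blast
  then show ?case using F2 by (auto simp: frv_def)
next
  case (F3 \<Sigma> a \<nu>)
  then show ?case by (auto simp: frv_def split: val.splits)
next
  case (F4 \<Sigma> a \<nu> b)
  then obtain n m where "tev rv rn (\<lambda>_. VU) a = VA (\<nu>, n)" "tev rv rn (\<lambda>_. VU) b = VA (\<nu>, m)"
    using name_atom[OF F4(1) \<open>valid \<Sigma> rv rn\<close>] name_atom[OF F4(2) \<open>valid \<Sigma> rv rn\<close>] by blast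
  then show ?case by (auto simp: frv_def)
next
  case (A1 \<Sigma> a \<nu> b x \<tau> y)
  then obtain n m where ab: "tev rv rn (\<lambda>_. VU) a = VA (\<nu>, n)" "tev rv rn (\<lambda>_. VU) b = VA (\<nu>, m)"
    using name_atom[OF A1(1) \<open>valid \<Sigma> rv rn\<close>] name_atom[OF A1(2) \<open>valid \<Sigma> rv rn\<close>] by blast
  define p where "p = (\<nu>, n)"
  define q where "q = (\<nu>, m)"
  define Y where "Y = tev rv rn (\<lambda>_. VU) y"
  have h: "p \<notin> atoms Y" "tev rv rn (\<lambda>_. VU) x = perm p q Y"
    using A1 ab by (auto simp: frv_def swp_def p_def q_def Y_def)
  have "clo 0 p (perm p q Y) = perm p q (clo 0 q Y)" by (simp add: perm_clo)
  also have "\<dots> = clo 0 q Y" using h by (intro perm_fresh) auto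
  finally show ?case using h ab by (simp add: absv_def p_def q_def Y_def)
qed




lemma nl_axiom_atoms: "nl_axiom S \<Sigma> Ps Qs \<Longrightarrow> \<forall>Q\<in>set Qs. is_atom Q"
  by (induction rule: nl_axiom.induct) auto

lemma snoc_split: "\<Sigma> @ [e] = \<Sigma>1 @ e' # \<Sigma>2 \<Longrightarrow>
   (\<Sigma>1 = \<Sigma> \<and> e' = e \<and> \<Sigma>2 = []) \<or> (\<exists>\<Sigma>2'. \<Sigma> = \<Sigma>1 @ e' # \<Sigma>2')"
  by (cases \<Sigma>2 rule: rev_cases) auto

lemma cvar_in: "CVar x \<tau> \<in> set \<Sigma> \<Longrightarrow> var_in x \<Sigma>"
  by (force simp: var_in_def)

lemma cnm_in: "CNm a \<nu> \<in> set \<Sigma> \<Longrightarrow> nm_in a \<Sigma>"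
  by (force simp: nm_in_def)

lemma valid_var: assumes h0: "valid \<Sigma> rv rn" and x: "\<not> var_in x \<Sigma>" and v: "indom v \<tau>"
  shows "valid (\<Sigma> @ [CVar x \<tau>]) (rv(x := v)) rn"
proof -
  have h: "(\<forall>x \<tau>. CVar x \<tau> \<in> set \<Sigma> \<longrightarrow> indom (rv x) \<tau>)"
    "(\<forall>a \<nu>. CNm a \<nu> \<in> set \<Sigma> \<longrightarrow> (\<exists>n. rn a = VA (\<nu>, n)))"
    "(\<forall>\<Sigma>1 a \<nu> \<Sigma>2. \<Sigma> = \<Sigma>1 @ CNm a \<nu> # \<Sigma>2 \<longrightarrow>
        (\<forall>x \<tau>. CVar x \<tau> \<in> set \<Sigma>1 \<longrightarrow> frv (rn a) (rv x)) \<and>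
        (\<forall>b \<nu>'. CNm b \<nu>' \<in> set \<Sigma>1 \<longrightarrow> frv (rn a) (rn b)))"
    using h0 unfolding valid_def by blast+
  show ?thesis
  unfolding valid_def
  proof (intro conjI allI impI)
    fix y \<tau>' assume "CVar y \<tau>' \<in> set (\<Sigma> @ [CVar x \<tau>])"
    then show "indom ((rv(x := v)) y) \<tau>'" using h x v by (auto dest: cvar_in)
  next
    fix a \<nu> assume "CNm a \<nu> \<in> set (\<Sigma> @ [CVar x \<tau>])"
    then show "\<exists>n. rn a = VA (\<nu>, n)" using h by auto
  next
    fix \<Sigma>1 a \<nu> \<Sigma>2 y \<tau>'
    assume s: "\<Sigma> @ [CVar x \<tau>] = \<Sigma>1 @ CNm a \<nu> # \<Sigma>2" and y: "CVar y \<tau>' \<in> set \<Sigma>1"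
    from snoc_split[OF s] obtain \<Sigma>2' where s': "\<Sigma> = \<Sigma>1 @ CNm a \<nu> # \<Sigma>2'" by auto
    have "y \<noteq> x" using y x s' by (force simp: var_in_def)
    then show "frv (rn a) ((rv(x := v)) y)" using h(3)[rule_format, OF s'] y by auto
  next
    fix \<Sigma>1 a \<nu> \<Sigma>2 b \<nu>'
    assume s: "\<Sigma> @ [CVar x \<tau>] = \<Sigma>1 @ CNm a \<nu> # \<Sigma>2" and b: "CNm b \<nu>' \<in> set \<Sigma>1"
    from snoc_split[OF s] obtain \<Sigma>2' where s': "\<Sigma> = \<Sigma>1 @ CNm a \<nu> # \<Sigma>2'" by auto
    then show "frv (rn a) (rn b)" using h(3)[rule_format, OF s'] b by auto
  qed
qed

lemma valid_nm: fixes \<Sigma> :: "('d, 'n) ctx" shows "valid \<Sigma> rv rn \<Longrightarrow> \<not> nm_in a \<Sigma> \<Longrightarrow>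
   \<exists>n. valid (\<Sigma> @ [CNm a \<nu>]) rv (rn(a := VA (\<nu>, n)))"
proof -
  assume h0: "valid \<Sigma> rv rn" and a: "\<not> nm_in a \<Sigma>"
  define f where "f e = (case e of CVar x \<tau> \<Rightarrow> atoms (rv x) | CNm b \<nu> \<Rightarrow> atoms (rn b))" for e :: "('d, 'n) centry"
  define F where "F = \<Union> (f ` set \<Sigma>)"
  have "finite F" by (auto simp: F_def f_def split: centry.splits)
  then have "finite (snd ` F)" by simp
  then obtain n where n: "n \<notin> snd ` F" using ex_new_if_finite[OF infinite_UNIV_nat] by blast
  have nF: "(\<nu>, n) \<notin> F" using n by force
  have vx: "(\<nu>, n) \<notin> atoms (rv x)" if "CVar x \<tau> \<in> set \<Sigma>" for x \<tau>
    using nF that unfolding F_def f_def by force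
  have vb: "(\<nu>, n) \<notin> atoms (rn b)" if "CNm b \<nu>' \<in> set \<Sigma>" for b \<nu>'
    using nF that unfolding F_def f_def by force
  let ?rn = "rn(a := VA (\<nu>, n))"
  have h: "(\<forall>x \<tau>. CVar x \<tau> \<in> set \<Sigma> \<longrightarrow> indom (rv x) \<tau>)"
    "(\<forall>a \<nu>. CNm a \<nu> \<in> set \<Sigma> \<longrightarrow> (\<exists>n. rn a = VA (\<nu>, n)))"
    "(\<forall>\<Sigma>1 a \<nu> \<Sigma>2. \<Sigma> = \<Sigma>1 @ CNm a \<nu> # \<Sigma>2 \<longrightarrow>
        (\<forall>x \<tau>. CVar x \<tau> \<in> set \<Sigma>1 \<longrightarrow> frv (rn a) (rv x)) \<and>
        (\<forall>b \<nu>'. CNm b \<nu>' \<in> set \<Sigma>1 \<longrightarrow> frv (rn a) (rn b)))"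
    using h0 unfolding valid_def by blast+
  have "valid (\<Sigma> @ [CNm a \<nu>]) rv ?rn"
    unfolding valid_def
  proof (intro conjI allI impI)
    fix y \<tau>' assume "CVar y \<tau>' \<in> set (\<Sigma> @ [CNm a \<nu>])"
    then show "indom (rv y) \<tau>'" using h by auto
  next
    fix b \<nu>' assume "CNm b \<nu>' \<in> set (\<Sigma> @ [CNm a \<nu>])"
    then show "\<exists>n. ?rn b = VA (\<nu>', n)" using h a by (auto dest: cnm_in)
  next
    fix \<Sigma>1 c \<nu>1 \<Sigma>2 y \<tau>'
    assume s: "\<Sigma> @ [CNm a \<nu>] = \<Sigma>1 @ CNm c \<nu>1 # \<Sigma>2" and y: "CVar y \<tau>' \<in> set \<Sigma>1"
    from snoc_split[OF s] show "frv (?rn c) (rv y)"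
    proof
      assume "\<Sigma>1 = \<Sigma> \<and> CNm c \<nu>1 = CNm a \<nu> \<and> \<Sigma>2 = []"
      then show ?thesis using vx y by (auto simp: frv_def)
    next
      assume "\<exists>\<Sigma>2'. \<Sigma> = \<Sigma>1 @ CNm c \<nu>1 # \<Sigma>2'"
      then obtain \<Sigma>2' where s': "\<Sigma> = \<Sigma>1 @ CNm c \<nu>1 # \<Sigma>2'" by blast
      have "c \<noteq> a" using a s' by (force simp: nm_in_def)
      then show ?thesis using h(3)[rule_format, OF s'] y by auto
    qed
  next
    fix \<Sigma>1 c \<nu>1 \<Sigma>2 b \<nu>'
    assume s: "\<Sigma> @ [CNm a \<nu>] = \<Sigma>1 @ CNm c \<nu>1 # \<Sigma>2" and b: "CNm b \<nu>' \<in> set \<Sigma>1"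
    from snoc_split[OF s] show "frv (?rn c) (?rn b)"
    proof
      assume e: "\<Sigma>1 = \<Sigma> \<and> CNm c \<nu>1 = CNm a \<nu> \<and> \<Sigma>2 = []"
      then have "b \<noteq> a" using a b by (auto dest: cnm_in)
      then show ?thesis using vb b e by (auto simp: frv_def)
    next
      assume "\<exists>\<Sigma>2'. \<Sigma> = \<Sigma>1 @ CNm c \<nu>1 # \<Sigma>2'"
      then obtain \<Sigma>2' where s': "\<Sigma> = \<Sigma>1 @ CNm c \<nu>1 # \<Sigma>2'" by blast
      have "c \<noteq> a" "b \<noteq> a" using a s' b by (force simp: nm_in_def)+
      then show ?thesis using h(3)[rule_format, OF s'] b by auto
    qed
  qed
  then show ?thesis by blast
qed

lemma holds_agree: "wff S \<Sigma> Bv Bn \<phi> \<Longrightarrow> Bv = [] \<Longrightarrow>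
  (\<forall>x \<tau>. CVar x \<tau> \<in> set \<Sigma> \<longrightarrow> rv x = rv' x) \<Longrightarrow> (\<forall>a \<nu>. CNm a \<nu> \<in> set \<Sigma> \<longrightarrow> rn a = rn' a) \<Longrightarrow>
  holdsb rv rn b \<phi> = holdsb rv' rn' b \<phi>"
proof (induction rule: wff.induct)
  case (W_Eq \<Sigma> Bv Bn t \<tau> u)
  then show ?case using ty_agree[of S \<Sigma> Bv Bn t \<tau> rv rv' rn rn' b] ty_agree[of S \<Sigma> Bv Bn u \<tau> rv rv' rn rn' b] by simp
next
  case (W_Fresh \<Sigma> Bv Bn a \<nu> t \<tau>)
  then show ?case using ty_agree[of S \<Sigma> Bv Bn a _ rv rv' rn rn' b] ty_agree[of S \<Sigma> Bv Bn t \<tau> rv rv' rn rn' b] by simp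
qed auto




lemma wff_abs_eq: "wff S \<Sigma> [] [] (Eq (Abst a t) (Abst b u)) \<Longrightarrow>
  \<exists>\<nu> \<tau> \<nu>' \<tau>'. tmty S \<Sigma> a (TName \<nu>) \<and> tmty S \<Sigma> t \<tau> \<and> tmty S \<Sigma> b (TName \<nu>') \<and> tmty S \<Sigma> u \<tau>'"
proof -
  assume "wff S \<Sigma> [] [] (Eq (Abst a t) (Abst b u))"
  then obtain \<tau>0 where h1: "tmty S \<Sigma> (Abst a t) \<tau>0" and h2: "tmty S \<Sigma> (Abst b u) \<tau>0"
    by (cases rule: wff.cases) auto
  from h1 obtain \<nu> \<tau> where "tmty S \<Sigma> a (TName \<nu>)" "tmty S \<Sigma> t \<tau>"
    by (cases rule: has_ty.cases) auto
  moreover from h2 obtain \<nu>' \<tau>' where "tmty S \<Sigma> b (TName \<nu>')" "tmty S \<Sigma> u \<tau>'"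
    by (cases rule: has_ty.cases) auto
  ultimately show ?thesis by blast
qed

lemma sound: "deriv S \<Sigma> \<Gamma> \<Delta> \<Longrightarrow> \<Delta> = {#Bot#} \<Longrightarrow> (\<forall>\<phi>\<in>#\<Gamma>. is_atom \<phi>) \<Longrightarrow>
   valid \<Sigma> rv rn \<Longrightarrow> \<exists>\<phi>\<in>#\<Gamma>. \<not> holds rv rn \<phi>"
proof (induction arbitrary: rv rn rule: deriv.induct)
  case (EqR \<Sigma> \<Gamma> \<Delta> t)
  have "\<exists>\<phi>\<in>#add_mset (Eq t t) \<Gamma>. \<not> holds rv rn \<phi>"
    using EqR.IH[OF EqR.prems(1) _ EqR.prems(3)] EqR.prems(2) by simp
  then show ?case by auto
next
  case (EqS \<Sigma> t u P \<Gamma> \<Delta>)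
  have IH: "\<exists>\<phi>\<in>#add_mset (Eq t u) (add_mset (inst P t) (add_mset (inst P u) \<Gamma>)). \<not> holds rv rn \<phi>"
    using EqS.IH[OF EqS.prems(1) _ EqS.prems(3)] EqS.prems(2) atom_open[OF \<open>is_atom P\<close>] by simp
  show ?case
  proof (rule ccontr)
    assume "\<not> ?case"
    then have h: "\<forall>\<phi>\<in>#add_mset (Eq t u) (add_mset (inst P t) \<Gamma>). holds rv rn \<phi>" by blast
    then have e: "tev rv rn (\<lambda>_. VU) t = tev rv rn (\<lambda>_. VU) u" by simp
    have "holds rv rn (inst P u)" using h holds_open[OF \<open>is_atom P\<close>, of rv rn "\<lambda>_. VU"] e by simp
    then show False using IH h by auto
  qed
next
  case (Axiom \<Sigma> \<Gamma> Ps \<Delta> Qs)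
  show ?case
  proof (rule ccontr)
    assume "\<not> ?case"
    then have h: "\<forall>\<phi>\<in>#\<Gamma> + mset Ps. holds rv rn \<phi>" by blast
    then have "\<forall>P\<in>set Ps. holds rv rn P" by simp
    then obtain Q where Q: "Q \<in> set Qs" "holds rv rn Q"
      using axiom_sound[OF Axiom.hyps(2) Axiom.prems(3)] by blast
    have "is_atom Q" using nl_axiom_atoms[OF Axiom.hyps(2)] Q(1) by blast
    have I: "\<Delta> = {#Bot#} \<longrightarrow> (\<forall>a\<in>#add_mset Q (\<Gamma> + mset Ps). is_atom a) \<longrightarrow>
        (\<forall>x xa. valid \<Sigma> x xa \<longrightarrow> (\<exists>\<phi>\<in>#add_mset Q (\<Gamma> + mset Ps). \<not> holds x xa \<phi>))"
      using bspec[OF Axiom.IH Q(1)] by blast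
    have "\<forall>a\<in>#add_mset Q (\<Gamma> + mset Ps). is_atom a" using Axiom.prems(2) \<open>is_atom Q\<close> by simp
    then have "\<exists>\<phi>\<in>#add_mset Q (\<Gamma> + mset Ps). \<not> holds rv rn \<phi>"
      using I Axiom.prems(1,3) by blast
    then show False using h Q(2) by auto
  qed
next
  case (A2 \<Sigma> a t b u \<Gamma> \<Delta>)
  let ?E = "Eq (Abst a t) (Abst b u)"
  have "wff S \<Sigma> [] [] ?E" using A2.hyps(1) by (simp add: wf_seq_def)
  then obtain \<nu> \<tau> \<nu>' \<tau>' where ty: "tmty S \<Sigma> a (TName \<nu>)" "tmty S \<Sigma> t \<tau>"
     "tmty S \<Sigma> b (TName \<nu>')" "tmty S \<Sigma> u \<tau>'" using wff_abs_eq by blast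
  define T where "T = tev rv rn (\<lambda>_. VU) t"
  define U where "U = tev rv rn (\<lambda>_. VU) u"
  obtain n where pa: "tev rv rn (\<lambda>_. VU) a = VA (\<nu>, n)" using name_atom[OF ty(1) A2.prems(3)] by blast
  obtain m where pb: "tev rv rn (\<lambda>_. VU) b = VA (\<nu>', m)" using name_atom[OF ty(3) A2.prems(3)] by blast
  define p where "p = (\<nu>, n)"
  define q where "q = (\<nu>', m)"
  have lT: "lc 0 T" using ty_indom[OF ty(2) _ _ A2.prems(3)] indom_lc unfolding T_def by blast
  have lU: "lc 0 U" using ty_indom[OF ty(4) _ _ A2.prems(3)] indom_lc unfolding U_def by blast
  show ?case
  proof (rule ccontr)
    assume "\<not> ?case"
    then have h: "\<forall>\<phi>\<in>#add_mset ?E \<Gamma>. holds rv rn \<phi>" by blast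
    then have E: "clo 0 p T = clo 0 q U" using pa pb by (simp add: absv_def T_def U_def p_def q_def)
    show False
    proof (cases "p = q")
      case True
      then have "T = U" using clo_inj[OF _ lT lU] E by simp
      then have "\<forall>\<phi>\<in>#add_mset ?E (add_mset (Eq a b) (add_mset (Eq t u) \<Gamma>)). holds rv rn \<phi>"
        using h True pa pb by (simp add: T_def U_def p_def q_def)
      moreover have "\<exists>\<phi>\<in>#add_mset ?E (add_mset (Eq a b) (add_mset (Eq t u) \<Gamma>)). \<not> holds rv rn \<phi>"
        using A2.IH(1)[OF A2.prems(1) _ A2.prems(3)] A2.prems(2) by simp
      ultimately show False by blast
    next
      case False
      have at: "atoms T - {p} = atoms U - {q}" using arg_cong[OF E, of atoms] by simp
      then have pU: "p \<notin> atoms U" and qT: "q \<notin> atoms T" using False by blast+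
      have "clo 0 p (perm p q U) = perm p q (clo 0 q U)" by (simp add: perm_clo)
      also have "\<dots> = perm p q (clo 0 p T)" using E by simp
      also have "\<dots> = clo 0 p T" using qT by (intro perm_fresh) auto
      finally have "T = perm p q U" using clo_inj[OF _ lT] lU by (metis lc_perm)
      then have "\<forall>\<phi>\<in>#add_mset ?E (add_mset (Fresh a u) (add_mset (Eq t (Swap a b u)) \<Gamma>)). holds rv rn \<phi>"
        using h pa pb pU by (simp add: T_def U_def p_def q_def swp_def frv_def)
      moreover have "\<exists>\<phi>\<in>#add_mset ?E (add_mset (Fresh a u) (add_mset (Eq t (Swap a b u)) \<Gamma>)). \<not> holds rv rn \<phi>"
        using A2.IH(2)[OF A2.prems(1) _ A2.prems(3)] A2.prems(2) by simp
      ultimately show False by blast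
    qed
  qed
next
  case (A3 \<Sigma> \<Gamma> \<Delta> t \<nu> \<sigma> a x)
  obtain n y where y: "indom y \<sigma>" "tev rv rn (\<lambda>_. VU) t = VL (clo 0 (\<nu>, n) y)"
    using ty_indom[OF A3.hyps(2) _ _ A3.prems(3), of "\<lambda>_. VU"] by auto
  define rv' where "rv' = rv(a := VA (\<nu>, n), x := y)"
  have v1: "valid (\<Sigma> @ [CVar a (TName \<nu>)]) (rv(a := VA (\<nu>, n))) rn"
    using valid_var[OF A3.prems(3) A3.hyps(3)] by simp
  have "\<not> var_in x (\<Sigma> @ [CVar a (TName \<nu>)])" using A3.hyps(4,5) by (simp add: var_in_def)
  then have v2: "valid (\<Sigma> @ [CVar a (TName \<nu>), CVar x \<sigma>]) rv' rn"
    using valid_var[OF v1 _ y(1)] by (simp add: rv'_def)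
  have ag: "\<forall>z \<tau>. CVar z \<tau> \<in> set \<Sigma> \<longrightarrow> rv z = rv' z"
    using A3.hyps(3,4) by (auto simp: rv'_def dest: cvar_in)
  have at: "\<forall>\<phi>\<in>#add_mset (Eq t (Abst (Var a) (Var x))) \<Gamma>. is_atom \<phi>" using A3.prems(2) by simp
  obtain \<phi> where \<phi>: "\<phi> \<in># add_mset (Eq t (Abst (Var a) (Var x))) \<Gamma>" "\<not> holds rv' rn \<phi>"
    using A3.IH[OF A3.prems(1) at v2] by blast
  have "tev rv' rn (\<lambda>_. VU) t = tev rv rn (\<lambda>_. VU) t"
    using ty_agree[OF A3.hyps(2) _ ag, of rn rn "\<lambda>_. VU"] by simp
  then have "holds rv' rn (Eq t (Abst (Var a) (Var x)))"
    using y A3.hyps(5) by (simp add: rv'_def absv_def)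
  then have "\<phi> \<in># \<Gamma>" using \<phi> by auto
  moreover have "wff S \<Sigma> [] [] \<phi>" using A3.hyps(1) \<open>\<phi> \<in># \<Gamma>\<close> by (simp add: wf_seq_def)
  ultimately show ?case using \<phi>(2) holds_agree[of S \<Sigma> "[]" "[]" \<phi> rv rv' rn rn] ag by auto
next
  case (FreshNm \<Sigma> \<Gamma> \<Delta> a \<nu>)
  obtain n where v: "valid (\<Sigma> @ [CNm a \<nu>]) rv (rn(a := VA (\<nu>, n)))"
    using valid_nm[OF FreshNm.prems(3) FreshNm.hyps(2)] by blast
  obtain \<phi> where \<phi>: "\<phi> \<in># \<Gamma>" "\<not> holds rv (rn(a := VA (\<nu>, n))) \<phi>"
    using FreshNm.IH[OF FreshNm.prems(1,2) v] by blast
  have ag: "\<forall>b \<nu>1. CNm b \<nu>1 \<in> set \<Sigma> \<longrightarrow> rn b = (rn(a := VA (\<nu>, n))) b"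
    using FreshNm.hyps(2) by (auto dest: cnm_in)
  have "wff S \<Sigma> [] [] \<phi>" using FreshNm.hyps(1) \<phi>(1) by (simp add: wf_seq_def)
  then show ?case using \<phi> holds_agree[of S \<Sigma> "[]" "[]" \<phi> rv rv rn "rn(a := VA (\<nu>, n))"] ag by auto
next
  case (CtxFresh \<Sigma> \<Gamma> \<Delta> a t)
  obtain \<Sigma>1 \<Sigma>2 \<nu> \<tau> where s: "\<Sigma> = \<Sigma>1 @ CNm a \<nu> # \<Sigma>2" and ty: "tmty S \<Sigma>1 t \<tau>"
    using CtxFresh.hyps(2) by (auto simp: ctx_fresh_def)
  have vd: "(\<forall>a \<nu>. CNm a \<nu> \<in> set \<Sigma> \<longrightarrow> (\<exists>n. rn a = VA (\<nu>, n)))"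
    "(\<forall>x \<tau>. CVar x \<tau> \<in> set \<Sigma>1 \<longrightarrow> frv (rn a) (rv x)) \<and>
     (\<forall>b \<nu>'. CNm b \<nu>' \<in> set \<Sigma>1 \<longrightarrow> frv (rn a) (rn b))"
    using CtxFresh.prems(3) s unfolding valid_def by blast+
  obtain n where n: "rn a = VA (\<nu>, n)" using vd(1) s by auto
  have "(\<nu>, n) \<notin> atoms (tev rv rn (\<lambda>_. VU) t)"
    using ty_atoms[OF ty, of "(\<nu>, n)" rv rn "\<lambda>_. VU"] vd(2) n by (auto simp: frv_def)
  then have hf: "holds rv rn (Fresh (Nm a) t)" using n by (simp add: frv_def)
  have "\<exists>\<phi>\<in>#add_mset (Fresh (Nm a) t) \<Gamma>. \<not> holds rv rn \<phi>"
    using CtxFresh.IH[OF CtxFresh.prems(1) _ CtxFresh.prems(3)] CtxFresh.prems(2) by simp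
  then show ?case using hf by auto
qed simp_all


theorem mainTheorem2:
  fixes S :: "('c, 'f, 'p, 'd, 'n) signature"
  shows "\<not> deriv S [] {#} {#Bot#}"
proof
  assume "deriv S [] {#} {#Bot#}"
  from sound[OF this, of "\<lambda>_. (VU :: 'n val)" "\<lambda>_. VU"] show False
    by (simp add: valid_def)
qed

end
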